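(* Let $\Gamma$ be a cofinite graph and let $\overline{\Gamma}$ denote its (Hausdorff uniform) completion, which is again a cofinite graph. The following statements are equivalent: (1) $\Gamma$ is cofinitely connected; (2) $\Gamma$ is not the uniform sum of two disjoint nonempty subgraphs; (3) $\overline{\Gamma}$ is cofinitely connected.
   Context: A graph $\Gamma$ is a set $\Gamma=V(\Gamma)\sqcup E(\Gamma)$ (vertices and edges) together with maps $s,t\colon E(\Gamma)\to V(\Gamma)$ and an involution $e\mapsto\overline e$ of $E(\Gamma)$ without fixed points such that $s(\overline e)=t(e)$ and $t(\overline e)=s(e)$. A subgraph is a subset closed under $s$, $t$ and $e\mapsto \overline e$. An equivalence relation $R$ on a graph $\Gamma$ is compatible if $R\subseteq (V(\Gamma)\times V(\Gamma))\cup(E(\Gamma)\times E(\Gamma))$, $(e,e')\in R$ implies $(s(e),s(e')),(t(e),t(e')),(\overline e,\overline{e'})\in R$, and $(e,\overline e)\notin R$ for every edge $e$; then the quotient $\Gamma/R$ is a graph. A cofinite entourage of a uniform space is an entourage that is an equivalence relation with finitely many equivalence classes. A cofinite graph is a graph equipped with a Hausdorff uniform structure in which the compatible cofinite entourages form a fundamental system of entourages. A path in a graph is a finite sequence of edges $e_1\cdots e_n$ with $t(e_i)=s(e_{i+1})$; a graph is path connected if any two vertices are joined by a path. A cofinite graph $\Gamma$ is cofinitely connected if $\Gamma/R$ is path connected for every compatible cofinite entourage $R$ of $\Gamma$. $\Gamma$ is the uniform sum of two disjoint subgraphs $\Gamma_1,\Gamma_2$ if $\Gamma=\Gamma_1\cup\Gamma_2$,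 $\Gamma_1\cap\Gamma_2=\emptyset$, and a subset $W\subseteq\Gamma\times\Gamma$ is an entourage of $\Gamma$ iff $W\supseteq W_1\cup W_2$ for some entourages $W_i$ of $\Gamma_i$ (with the subspace uniformities). *)

theory Defs
  imports Main
begin

record 'a graph =
  gverts :: "'a set"
  gedges :: "'a set"
  gsrc   :: "'a \<Rightarrow> 'a"
  gtgt   :: "'a \<Rightarrow> 'a"
  gbar   :: "'a \<Rightarrow> 'a"

record 'a ugraph = "'a graph" +
  gunif :: "('a \<times> 'a) set set"

definition gcarrier :: "('a, 'm) graph_scheme \<Rightarrow> 'a set" where
  "gcarrier G = gverts G \<union> gedges G"

definition is_graph :: "('a, 'm) graph_scheme \<Rightarrow> bool" where
  "is_graph G \<longleftrightarrow> gverts G \<inter> gedges G = {} \<and>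
     (\<forall>e\<in>gedges G. gsrc G e \<in> gverts G \<and> gtgt G e \<in> gverts G \<and>
        gbar G e \<in> gedges G \<and> gbar G e \<noteq> e \<and> gbar G (gbar G e) = e \<and>
        gsrc G (gbar G e) = gtgt G e \<and> gtgt G (gbar G e) = gsrc G e)"

definition path_between :: "('a, 'm) graph_scheme \<Rightarrow> 'a \<Rightarrow> 'a \<Rightarrow> 'a list \<Rightarrow> bool" where
  "path_between G u w es \<longleftrightarrow>
     (es = [] \<and> u = w) \<or>
     (es \<noteq> [] \<and> set es \<subseteq> gedges G \<and> gsrc G (hd es) = u \<and> gtgt G (last es) = w \<and>
      (\<forall>i. Suc i < length es \<longrightarrow> gtgt G (es ! i) = gsrc G (es ! Suc i)))"

definition path_connected_graph :: "('a, 'm) graph_scheme \<Rightarrow> bool" where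
  "path_connected_graph G \<longleftrightarrow>
     (\<forall>u\<in>gverts G. \<forall>w\<in>gverts G. \<exists>es. path_between G u w es)"

definition uniformity_on :: "'a set \<Rightarrow> ('a \<times> 'a) set set \<Rightarrow> bool" where
  "uniformity_on X U \<longleftrightarrow> U \<noteq> {} \<and>
     (\<forall>W\<in>U. W \<subseteq> X \<times> X \<and> Id_on X \<subseteq> W \<and> W\<inverse> \<in> U \<and> (\<exists>V\<in>U. V O V \<subseteq> W)) \<and>
     (\<forall>W1\<in>U. \<forall>W2\<in>U. W1 \<inter> W2 \<in> U) \<and>
     (\<forall>W\<in>U. \<forall>W'. W \<subseteq> W' \<and> W' \<subseteq> X \<times> X \<longrightarrow> W' \<in> U)"

definition hausdorff_unif :: "'a set \<Rightarrow> ('a \<times> 'a) set set \<Rightarrow> bool" where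
  "hausdorff_unif X U \<longleftrightarrow> \<Inter>U = Id_on X"

definition subspace_unif :: "('a \<times> 'a) set set \<Rightarrow> 'a set \<Rightarrow> ('a \<times> 'a) set set" where
  "subspace_unif U A = {W \<inter> (A \<times> A) | W. W \<in> U}"

definition cauchy_filter :: "'a set \<Rightarrow> ('a \<times> 'a) set set \<Rightarrow> 'a filter \<Rightarrow> bool" where
  "cauchy_filter X U F \<longleftrightarrow> F \<noteq> bot \<and> F \<le> principal X \<and>
     (\<forall>W\<in>U. eventually (\<lambda>p. p \<in> W) (F \<times>\<^sub>F F))"

text \<open>A filter converges to x iff it contains every neighbourhood W[x] of x.\<close>
definition complete_unif :: "'a set \<Rightarrow> ('a \<times> 'a) set set \<Rightarrow> bool" where
  "complete_unif X U \<longleftrightarrow>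
     (\<forall>F. cauchy_filter X U F \<longrightarrow> (\<exists>x\<in>X. \<forall>W\<in>U. eventually (\<lambda>y. (x, y) \<in> W) F))"

definition compatible_rel :: "('a, 'm) graph_scheme \<Rightarrow> ('a \<times> 'a) set \<Rightarrow> bool" where
  "compatible_rel G R \<longleftrightarrow>
     R \<subseteq> (gverts G \<times> gverts G) \<union> (gedges G \<times> gedges G) \<and>
     (\<forall>(e, e')\<in>R. e \<in> gedges G \<longrightarrow>
        (gsrc G e, gsrc G e') \<in> R \<and> (gtgt G e, gtgt G e') \<in> R \<and> (gbar G e, gbar G e') \<in> R) \<and>
     (\<forall>e\<in>gedges G. (e, gbar G e) \<notin> R)"

definition compatible_equiv :: "('a, 'm) graph_scheme \<Rightarrow> ('a \<times> 'a) set \<Rightarrow> bool" where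
  "compatible_equiv G R \<longleftrightarrow> equiv (gcarrier G) R \<and> compatible_rel G R"

definition cofinite_entourage :: "'a ugraph \<Rightarrow> ('a \<times> 'a) set \<Rightarrow> bool" where
  "cofinite_entourage G R \<longleftrightarrow>
     R \<in> gunif G \<and> equiv (gcarrier G) R \<and> finite (gcarrier G // R)"

definition cofinite_graph :: "'a ugraph \<Rightarrow> bool" where
  "cofinite_graph G \<longleftrightarrow> is_graph G \<and> uniformity_on (gcarrier G) (gunif G) \<and>
     hausdorff_unif (gcarrier G) (gunif G) \<and>
     (\<forall>W\<in>gunif G. \<exists>R. compatible_equiv G R \<and> cofinite_entourage G R \<and> R \<subseteq> W)"

definition quotient_graph :: "('a, 'm) graph_scheme \<Rightarrow> ('a \<times> 'a) set \<Rightarrow> 'a set graph" where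
  "quotient_graph G R =
     \<lparr> gverts = gverts G // R, gedges = gedges G // R,
       gsrc = (\<lambda>C. R `` (gsrc G ` C)), gtgt = (\<lambda>C. R `` (gtgt G ` C)),
       gbar = (\<lambda>C. R `` (gbar G ` C)) \<rparr>"

definition cofinitely_connected :: "'a ugraph \<Rightarrow> bool" where
  "cofinitely_connected G \<longleftrightarrow>
     (\<forall>R. compatible_equiv G R \<and> cofinite_entourage G R \<longrightarrow>
        path_connected_graph (quotient_graph G R))"

definition is_subgraph :: "('a, 'm) graph_scheme \<Rightarrow> 'a set \<Rightarrow> bool" where
  "is_subgraph G S \<longleftrightarrow> S \<subseteq> gcarrier G \<and>
     (\<forall>e\<in>S \<inter> gedges G. gsrc G e \<in> S \<and> gtgt G e \<in> S \<and> gbar G e \<in> S)"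

definition uniform_sum :: "'a ugraph \<Rightarrow> 'a set \<Rightarrow> 'a set \<Rightarrow> bool" where
  "uniform_sum G S1 S2 \<longleftrightarrow> is_subgraph G S1 \<and> is_subgraph G S2 \<and>
     S1 \<union> S2 = gcarrier G \<and> S1 \<inter> S2 = {} \<and>
     (\<forall>W. W \<subseteq> gcarrier G \<times> gcarrier G \<longrightarrow>
        (W \<in> gunif G \<longleftrightarrow>
          (\<exists>W1\<in>subspace_unif (gunif G) S1. \<exists>W2\<in>subspace_unif (gunif G) S2. W1 \<union> W2 \<subseteq> W)))"

text \<open>Completions are unique up to isomorphism.\<close>
definition is_completion :: "'a ugraph \<Rightarrow> 'b ugraph \<Rightarrow> ('a \<Rightarrow> 'b) \<Rightarrow> bool" where
  "is_completion G H \<phi> \<longleftrightarrow> cofinite_graph H \<and>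
     \<phi> ` gverts G \<subseteq> gverts H \<and> \<phi> ` gedges G \<subseteq> gedges H \<and>
     (\<forall>e\<in>gedges G. \<phi> (gsrc G e) = gsrc H (\<phi> e) \<and> \<phi> (gtgt G e) = gtgt H (\<phi> e) \<and>
        \<phi> (gbar G e) = gbar H (\<phi> e)) \<and>
     inj_on \<phi> (gcarrier G) \<and>
     gunif G = {map_prod \<phi> \<phi> -` W \<inter> (gcarrier G \<times> gcarrier G) | W. W \<in> gunif H} \<and>
     (\<forall>y\<in>gcarrier H. \<forall>W\<in>gunif H. \<exists>x\<in>gcarrier G. (y, \<phi> x) \<in> W) \<and>
     complete_unif (gcarrier H) (gunif H)"

end

theory Submission imports Defs begin

definition disc :: "'a ugraph \<Rightarrow> 'a set \<Rightarrow> 'a set \<Rightarrow> bool" where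
  "disc G S1 S2 \<longleftrightarrow> is_subgraph G S1 \<and> is_subgraph G S2 \<and> S1 \<union> S2 = gcarrier G \<and>
     S1 \<inter> S2 = {} \<and> S1 \<noteq> {} \<and> S2 \<noteq> {} \<and> S1 \<times> S1 \<union> S2 \<times> S2 \<in> gunif G"

lemma unif_parts:
  assumes "uniformity_on X U"
  shows "U \<noteq> {}" "\<forall>W\<in>U. W \<subseteq> X \<times> X" "\<forall>W1\<in>U. \<forall>W2\<in>U. W1 \<inter> W2 \<in> U"
     "\<forall>W\<in>U. \<forall>W'. W \<subseteq> W' \<and> W' \<subseteq> X \<times> X \<longrightarrow> W' \<in> U"
  using assms unfolding uniformity_on_def apply -
  by metis+

lemma unif_up:
  assumes "uniformity_on X U" "W \<in> U" "W \<subseteq> W'" "W' \<subseteq> X \<times> X" shows "W' \<in> U"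
  using unif_parts(4)[OF assms(1)] assms(2-4) by blast

lemma unif_int:
  assumes "uniformity_on X U" "W \<in> U" "W' \<in> U" shows "W \<inter> W' \<in> U"
  using unif_parts(3)[OF assms(1)] assms(2-3) by blast

lemma unif_full:
  assumes "uniformity_on X U" shows "X \<times> X \<in> U"
proof -
  from unif_parts(1)[OF assms] obtain W where "W \<in> U" by blast
  moreover have "W \<subseteq> X \<times> X" using unif_parts(2)[OF assms] calculation by blast
  ultimately show ?thesis using unif_up[OF assms] by blast
qed

lemma compl:
  assumes "is_completion G H \<phi>"
  shows "cofinite_graph H" "\<phi> ` gverts G \<subseteq> gverts H" "\<phi> ` gedges G \<subseteq> gedges H"
    "\<forall>e\<in>gedges G. \<phi> (gsrc G e) = gsrc H (\<phi> e) \<and> \<phi> (gtgt G e) = gtgt H (\<phi> e) \<and>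
        \<phi> (gbar G e) = gbar H (\<phi> e)"
    "gunif G = {map_prod \<phi> \<phi> -` W \<inter> (gcarrier G \<times> gcarrier G) | W. W \<in> gunif H}"
    "\<forall>y\<in>gcarrier H. \<forall>W\<in>gunif H. \<exists>x\<in>gcarrier G. (y, \<phi> x) \<in> W"
  using assms unfolding is_completion_def apply -
  by metis+

lemma cofg:
  assumes "cofinite_graph G"
  shows "is_graph G" "uniformity_on (gcarrier G) (gunif G)"
    "\<forall>W\<in>gunif G. \<exists>R. compatible_equiv G R \<and> cofinite_entourage G R \<and> R \<subseteq> W"
  using assms unfolding cofinite_graph_def apply -
  by metis+

lemma lemC:
  assumes "cofinite_graph G" "uniform_sum G S1 S2" "S1 \<noteq> {}" "S2 \<noteq> {}"
  shows "disc G S1 S2"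
proof -
  note U = cofg(2)[OF assms(1)]
  have sg: "is_subgraph G S1" "is_subgraph G S2" "S1 \<union> S2 = gcarrier G" "S1 \<inter> S2 = {}"
    and iff: "\<And>W. W \<subseteq> gcarrier G \<times> gcarrier G \<Longrightarrow>
        (W \<in> gunif G \<longleftrightarrow>
          (\<exists>W1\<in>subspace_unif (gunif G) S1. \<exists>W2\<in>subspace_unif (gunif G) S2. W1 \<union> W2 \<subseteq> W))"
    using assms(2) unfolding uniform_sum_def by auto
  have sub: "S1 \<subseteq> gcarrier G" "S2 \<subseteq> gcarrier G" using sg(3) by auto
  have full: "gcarrier G \<times> gcarrier G \<in> gunif G" using unif_full[OF U] .
  have e1: "S1 \<times> S1 = (gcarrier G \<times> gcarrier G) \<inter> (S1 \<times> S1)" using sub by blast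
  have e2: "S2 \<times> S2 = (gcarrier G \<times> gcarrier G) \<inter> (S2 \<times> S2)" using sub by blast
  have m1: "S1 \<times> S1 \<in> subspace_unif (gunif G) S1"
    unfolding subspace_unif_def using full e1 by blast
  have m2: "S2 \<times> S2 \<in> subspace_unif (gunif G) S2"
    unfolding subspace_unif_def using full e2 by blast
  have ss: "S1 \<times> S1 \<union> S2 \<times> S2 \<subseteq> gcarrier G \<times> gcarrier G" using sub by blast
  have "S1 \<times> S1 \<union> S2 \<times> S2 \<in> gunif G"
    using iff[OF ss] m1 m2 by blast
  then show ?thesis unfolding disc_def using sg assms(3,4) by simp
qed


lemma lemD:
  assumes "cofinite_graph G" "is_completion G H \<phi>" "disc H T1 T2"
  shows "\<exists>S1 S2. disc G S1 S2"
proof -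
  let ?S1 = "{x \<in> gcarrier G. \<phi> x \<in> T1}" and ?S2 = "{x \<in> gcarrier G. \<phi> x \<in> T2}"
  note gG = cofg(1)[OF assms(1)]
  note mor = compl(4)[OF assms(2)] and vv = compl(2)[OF assms(2)] and ee = compl(3)[OF assms(2)]
    and ueq = compl(5)[OF assms(2)] and dense = compl(6)[OF assms(2)]
  have T: "is_subgraph H T1" "is_subgraph H T2" "T1 \<union> T2 = gcarrier H" "T1 \<inter> T2 = {}" "T1 \<noteq> {}" "T2 \<noteq> {}"
     "T1 \<times> T1 \<union> T2 \<times> T2 \<in> gunif H" using assms(3) unfolding disc_def by metis+
  have sg: "is_subgraph G {x \<in> gcarrier G. \<phi> x \<in> T}" if h: "is_subgraph H T" for T
  proof -
    { fix e assume e: "e \<in> gedges G" "\<phi> e \<in> T"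
      have "\<phi> e \<in> gedges H" using e ee by blast
      hence "gsrc H (\<phi> e) \<in> T \<and> gtgt H (\<phi> e) \<in> T \<and> gbar H (\<phi> e) \<in> T"
        using h e unfolding is_subgraph_def by blast
      moreover have "gsrc G e \<in> gcarrier G \<and> gtgt G e \<in> gcarrier G \<and> gbar G e \<in> gcarrier G"
        using gG e unfolding is_graph_def gcarrier_def by blast
      ultimately have "gsrc G e \<in> {x \<in> gcarrier G. \<phi> x \<in> T} \<and> gtgt G e \<in> {x \<in> gcarrier G. \<phi> x \<in> T}
          \<and> gbar G e \<in> {x \<in> gcarrier G. \<phi> x \<in> T}" using mor e by auto }
    then show ?thesis unfolding is_subgraph_def by blast
  qed
  have img: "\<phi> ` gcarrier G \<subseteq> gcarrier H" using vv ee unfolding gcarrier_def by blast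
  have ne: "{x \<in> gcarrier G. \<phi> x \<in> T} \<noteq> {}" if h: "T \<noteq> {}" "T = T1 \<or> T = T2" for T
  proof -
    obtain y where y: "y \<in> T" using h by blast
    have "y \<in> gcarrier H" using y h T(3) by blast
    then obtain x where "x \<in> gcarrier G" "(y, \<phi> x) \<in> T1 \<times> T1 \<union> T2 \<times> T2" using dense T(7) by blast
    then show ?thesis using y h T(4) by blast
  qed
  have "?S1 \<times> ?S1 \<union> ?S2 \<times> ?S2 = map_prod \<phi> \<phi> -` (T1 \<times> T1 \<union> T2 \<times> T2) \<inter> (gcarrier G \<times> gcarrier G)"
    by auto
  hence ent: "?S1 \<times> ?S1 \<union> ?S2 \<times> ?S2 \<in> gunif G" using ueq T(7) by blast
  have un: "?S1 \<union> ?S2 = gcarrier G" using img T(3) by blast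
  have dj: "?S1 \<inter> ?S2 = {}" using T(4) by blast
  have "disc G ?S1 ?S2" unfolding disc_def
    using sg[OF T(1)] sg[OF T(2)] ne[OF T(5)] ne[OF T(6)] ent un dj by simp
  then show ?thesis by blast
qed

lemma lemE:
  assumes "cofinite_graph G" "is_completion G H \<phi>" "disc G S1 S2"
  shows "\<exists>T1 T2. disc H T1 T2"
proof -
  note cH = compl(1)[OF assms(2)] and mor = compl(4)[OF assms(2)] and vv = compl(2)[OF assms(2)] and ee = compl(3)[OF assms(2)]
    and ueq = compl(5)[OF assms(2)] and dense = compl(6)[OF assms(2)]
  note gH = cofg(1)[OF cH] and UH = cofg(2)[OF cH] and base = cofg(3)[OF cH]
  have S: "is_subgraph G S1" "is_subgraph G S2" "S1 \<union> S2 = gcarrier G" "S1 \<inter> S2 = {}" "S1 \<noteq> {}" "S2 \<noteq> {}"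
     "S1 \<times> S1 \<union> S2 \<times> S2 \<in> gunif G" using assms(3) unfolding disc_def by metis+
  have "S1 \<times> S1 \<union> S2 \<times> S2 \<in> {map_prod \<phi> \<phi> -` W \<inter> (gcarrier G \<times> gcarrier G) | W. W \<in> gunif H}"
    using S(7) ueq by simp
  then obtain W where W: "W \<in> gunif H" "S1 \<times> S1 \<union> S2 \<times> S2 = map_prod \<phi> \<phi> -` W \<inter> (gcarrier G \<times> gcarrier G)"
    by blast
  obtain R where R: "compatible_equiv H R" "cofinite_entourage H R" "R \<subseteq> W" using base W(1) by blast
  have eq: "equiv (gcarrier H) R" and cr: "compatible_rel H R" and RU: "R \<in> gunif H"
    using R unfolding compatible_equiv_def cofinite_entourage_def by metis+
  have Rsub: "R \<subseteq> (gverts H \<times> gverts H) \<union> (gedges H \<times> gedges H)"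
    and Rc: "\<forall>(e, e')\<in>R. e \<in> gedges H \<longrightarrow>
        (gsrc H e, gsrc H e') \<in> R \<and> (gtgt H e, gtgt H e') \<in> R \<and> (gbar H e, gbar H e') \<in> R"
    using cr[unfolded compatible_rel_def, THEN conjunct1] cr[unfolded compatible_rel_def, THEN conjunct2, THEN conjunct1] by -
  have sym: "sym R" and trans: "trans R" and refl: "refl_on (gcarrier H) R"
    using eq[unfolded equiv_def, THEN conjunct2, THEN conjunct2, THEN conjunct1]
      eq[unfolded equiv_def, THEN conjunct2, THEN conjunct2, THEN conjunct2]
      eq[unfolded equiv_def, THEN conjunct2, THEN conjunct1] by -
  have Rcar: "R \<subseteq> gcarrier H \<times> gcarrier H" using equiv_type[OF eq] .
  define T where "T S = {y \<in> gcarrier H. \<exists>x\<in>S. (y, \<phi> x) \<in> R}" for S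
  have img: "\<phi> ` gcarrier G \<subseteq> gcarrier H" using vv ee unfolding gcarrier_def by blast
  have gHd: "gverts H \<inter> gedges H = {}" and gHc: "\<forall>e\<in>gedges H. gsrc H e \<in> gverts H \<and> gtgt H e \<in> gverts H \<and>
        gbar H e \<in> gedges H" using gH[unfolded is_graph_def, THEN conjunct1] gH[unfolded is_graph_def, THEN conjunct2] by blast+
  have sg: "is_subgraph H (T S)" if h: "is_subgraph G S" for S
  proof -
    { fix y assume y: "y \<in> T S" "y \<in> gedges H"
      then obtain x where x: "x \<in> S" "(y, \<phi> x) \<in> R" unfolding T_def by blast
      have xc: "x \<in> gcarrier G" using x h unfolding is_subgraph_def by blast
      have "\<phi> x \<in> gedges H" using x Rsub y gHd by blast
      hence xe: "x \<in> gedges G" using xc vv gHd unfolding gcarrier_def by blast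
      hence xs: "gsrc G x \<in> S \<and> gtgt G x \<in> S \<and> gbar G x \<in> S" using h x unfolding is_subgraph_def by blast
      have "(gsrc H y, gsrc H (\<phi> x)) \<in> R \<and> (gtgt H y, gtgt H (\<phi> x)) \<in> R \<and> (gbar H y, gbar H (\<phi> x)) \<in> R"
        using bspec[OF Rc x(2)] y(2) by simp
      hence r: "(gsrc H y, \<phi> (gsrc G x)) \<in> R \<and> (gtgt H y, \<phi> (gtgt G x)) \<in> R \<and> (gbar H y, \<phi> (gbar G x)) \<in> R"
        using mor xe by simp
      have "gsrc H y \<in> gcarrier H \<and> gtgt H y \<in> gcarrier H \<and> gbar H y \<in> gcarrier H"
        using gHc y unfolding gcarrier_def by blast
      hence "gsrc H y \<in> T S \<and> gtgt H y \<in> T S \<and> gbar H y \<in> T S" using r xs unfolding T_def by blast }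
    then show ?thesis unfolding is_subgraph_def T_def by blast
  qed
  have un: "T S1 \<union> T S2 = gcarrier H"
  proof
    show "T S1 \<union> T S2 \<subseteq> gcarrier H" unfolding T_def by blast
    show "gcarrier H \<subseteq> T S1 \<union> T S2"
    proof
      fix y assume y: "y \<in> gcarrier H"
      then obtain x where "x \<in> gcarrier G" "(y, \<phi> x) \<in> R" using dense RU by blast
      then show "y \<in> T S1 \<union> T S2" using y S(3) unfolding T_def by blast
    qed
  qed
  have dj: "T S1 \<inter> T S2 = {}"
  proof (rule ccontr)
    assume "T S1 \<inter> T S2 \<noteq> {}"
    then obtain y x1 x2 where x: "x1 \<in> S1" "x2 \<in> S2" "(y, \<phi> x1) \<in> R" "(y, \<phi> x2) \<in> R" unfolding T_def by blast
    have "(\<phi> x1, \<phi> x2) \<in> R" using x symD[OF sym] transD[OF trans] by blast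
    moreover have "x1 \<in> gcarrier G" "x2 \<in> gcarrier G" using x S(3) by blast+
    ultimately have "(x1, x2) \<in> map_prod \<phi> \<phi> -` W \<inter> (gcarrier G \<times> gcarrier G)" using R(3) by auto
    hence "(x1, x2) \<in> S1 \<times> S1 \<union> S2 \<times> S2" unfolding W(2) .
    then show False using x S(4) by blast
  qed
  have ne: "T S \<noteq> {}" if h: "S \<noteq> {}" "S \<subseteq> gcarrier G" for S
  proof -
    obtain x where x: "x \<in> S" using h by blast
    hence "\<phi> x \<in> gcarrier H" using img h by blast
    hence "(\<phi> x, \<phi> x) \<in> R" using refl unfolding refl_on_def by blast
    then show ?thesis using x \<open>\<phi> x \<in> gcarrier H\<close> unfolding T_def by blast
  qed
  have "R \<subseteq> T S1 \<times> T S1 \<union> T S2 \<times> T S2"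
  proof
    fix p assume p: "p \<in> R"
    obtain y z where yz: "p = (y, z)" by (cases p)
    have yc: "y \<in> gcarrier H" "z \<in> gcarrier H" using p yz Rcar by blast+
    then obtain i where i: "y \<in> T i" "i = S1 \<or> i = S2" using un by blast
    then obtain x where "x \<in> i" "(y, \<phi> x) \<in> R" unfolding T_def by blast
    hence "(z, \<phi> x) \<in> R" using p yz symD[OF sym] transD[OF trans] by blast
    hence "z \<in> T i" using \<open>x \<in> i\<close> yc unfolding T_def by blast
    then show "p \<in> T S1 \<times> T S1 \<union> T S2 \<times> T S2" using i yz by blast
  qed
  moreover have "T S1 \<times> T S1 \<union> T S2 \<times> T S2 \<subseteq> gcarrier H \<times> gcarrier H" using un by blast
  ultimately have ent: "T S1 \<times> T S1 \<union> T S2 \<times> T S2 \<in> gunif H"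
    using unif_up[OF UH RU] by blast
  have "disc H (T S1) (T S2)" unfolding disc_def
    using sg[OF S(1)] sg[OF S(2)] un dj ne[OF S(5)] ne[OF S(6)] S(3) ent by auto
  then show ?thesis by blast
qed

lemma qg_simps:
  "gverts (quotient_graph G R) = gverts G // R"
  "gedges (quotient_graph G R) = gedges G // R"
  "gsrc (quotient_graph G R) = (\<lambda>C. R `` (gsrc G ` C))"
  "gtgt (quotient_graph G R) = (\<lambda>C. R `` (gtgt G ` C))"
  "gbar (quotient_graph G R) = (\<lambda>C. R `` (gbar G ` C))"
  by (simp_all add: quotient_graph_def)

lemma ceq_parts:
  assumes "compatible_equiv G R"
  shows "equiv (gcarrier G) R" "R \<subseteq> (gverts G \<times> gverts G) \<union> (gedges G \<times> gedges G)"
    "\<And>e e'. (e, e') \<in> R \<Longrightarrow> e \<in> gedges G \<Longrightarrow>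
        (gsrc G e, gsrc G e') \<in> R \<and> (gtgt G e, gtgt G e') \<in> R \<and> (gbar G e, gbar G e') \<in> R"
proof -
  have cr: "compatible_rel G R" using assms[unfolded compatible_equiv_def, THEN conjunct2] .
  show "equiv (gcarrier G) R" using assms[unfolded compatible_equiv_def, THEN conjunct1] .
  show "R \<subseteq> (gverts G \<times> gverts G) \<union> (gedges G \<times> gedges G)"
    using cr[unfolded compatible_rel_def, THEN conjunct1] .
  fix e e' assume "(e, e') \<in> R" "e \<in> gedges G"
  then show "(gsrc G e, gsrc G e') \<in> R \<and> (gtgt G e, gtgt G e') \<in> R \<and> (gbar G e, gbar G e') \<in> R"
    using bspec[OF cr[unfolded compatible_rel_def, THEN conjunct2, THEN conjunct1]] by fastforce
qed

lemma class_map: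
  assumes eq: "equiv A R" and e: "e \<in> A"
    and comp: "\<And>y. (e, y) \<in> R \<Longrightarrow> (f e, f y) \<in> R"
  shows "R `` (f ` (R `` {e})) = R `` {f e}"
proof
  show "R `` {f e} \<subseteq> R `` (f ` (R `` {e}))"
    using equiv_class_self[OF eq e] by blast
  show "R `` (f ` (R `` {e})) \<subseteq> R `` {f e}"
  proof
    fix z assume "z \<in> R `` (f ` (R `` {e}))"
    then obtain y where y: "(e, y) \<in> R" "(f y, z) \<in> R" by blast
    have "(f e, f y) \<in> R" using comp y(1) .
    then have "(f e, z) \<in> R" using y(2) eq[unfolded equiv_def, THEN conjunct2, THEN conjunct2, THEN conjunct2]
      by (meson transD)
    then show "z \<in> R `` {f e}" by blast
  qed
qed

lemma qclass:
  assumes "compatible_equiv G R" "e \<in> gedges G"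
  shows "gsrc (quotient_graph G R) (R `` {e}) = R `` {gsrc G e}"
    "gtgt (quotient_graph G R) (R `` {e}) = R `` {gtgt G e}"
    "gbar (quotient_graph G R) (R `` {e}) = R `` {gbar G e}"
proof -
  note eq = ceq_parts(1)[OF assms(1)] and cp = ceq_parts(3)[OF assms(1)]
  have ec: "e \<in> gcarrier G" using assms(2) unfolding gcarrier_def by blast
  show "gsrc (quotient_graph G R) (R `` {e}) = R `` {gsrc G e}"
    unfolding qg_simps by (rule class_map[OF eq ec]) (use cp assms(2) in blast)
  show "gtgt (quotient_graph G R) (R `` {e}) = R `` {gtgt G e}"
    unfolding qg_simps by (rule class_map[OF eq ec]) (use cp assms(2) in blast)
  show "gbar (quotient_graph G R) (R `` {e}) = R `` {gbar G e}"
    unfolding qg_simps by (rule class_map[OF eq ec]) (use cp assms(2) in blast)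
qed

lemma path_snoc:
  assumes "path_between Q u C es" "D \<in> gedges Q" "gsrc Q D = C"
  shows "path_between Q u (gtgt Q D) (es @ [D])"
proof (cases "es = []")
  case True
  then show ?thesis using assms unfolding path_between_def by auto
next
  case False
  have p: "set es \<subseteq> gedges Q" "gsrc Q (hd es) = u" "gtgt Q (last es) = C"
     "\<forall>i. Suc i < length es \<longrightarrow> gtgt Q (es ! i) = gsrc Q (es ! Suc i)"
    using assms(1) False unfolding path_between_def by auto
  have "\<forall>i. Suc i < length (es @ [D]) \<longrightarrow> gtgt Q ((es @ [D]) ! i) = gsrc Q ((es @ [D]) ! Suc i)"
  proof (intro allI impI)
    fix i assume i: "Suc i < length (es @ [D])"
    show "gtgt Q ((es @ [D]) ! i) = gsrc Q ((es @ [D]) ! Suc i)"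
    proof (cases "Suc i < length es")
      case True
      then show ?thesis using p(4) by (simp add: nth_append)
    next
      case F: False
      then have "Suc i = length es" using i by simp
      then have ii: "i = length es - 1" by simp
      then have "(es @ [D]) ! i = last es" "(es @ [D]) ! Suc i = D"
        using False \<open>Suc i = length es\<close> by (simp_all add: nth_append last_conv_nth)
      then show ?thesis using p(3) assms(3) by simp
    qed
  qed
  then show ?thesis using p False assms(2) unfolding path_between_def by auto
qed

lemma lemA:
  assumes cG: "cofinite_graph G" and cc: "cofinitely_connected G" and d: "disc G S1 S2"
  shows False
proof -
  note gG = cofg(1)[OF cG] and base = cofg(3)[OF cG]
  have S: "is_subgraph G S1" "is_subgraph G S2" "S1 \<union> S2 = gcarrier G" "S1 \<inter> S2 = {}" "S1 \<noteq> {}" "S2 \<noteq> {}"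
     "S1 \<times> S1 \<union> S2 \<times> S2 \<in> gunif G" using d unfolding disc_def by metis+
  obtain R where R: "compatible_equiv G R" "cofinite_entourage G R" "R \<subseteq> S1 \<times> S1 \<union> S2 \<times> S2"
    using base S(7) by blast
  note eq = ceq_parts(1)[OF R(1)]
  let ?Q = "quotient_graph G R"
  have pc: "path_connected_graph ?Q" using cc R(1,2) unfolding cofinitely_connected_def by blast
  have gsrcv: "gsrc G e \<in> gverts G" "gtgt G e \<in> gverts G" if "e \<in> gedges G" for e
    using gG that unfolding is_graph_def by blast+
  have vert: "\<exists>v\<in>S. v \<in> gverts G" if h: "is_subgraph G S" "S \<noteq> {}" for S
  proof -
    obtain x where x: "x \<in> S" using h by blast
    have "x \<in> gcarrier G" using x h unfolding is_subgraph_def by blast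
    show ?thesis
    proof (cases "x \<in> gverts G")
      case True then show ?thesis using x by blast
    next
      case False
      then have "x \<in> gedges G" using \<open>x \<in> gcarrier G\<close> unfolding gcarrier_def by blast
      then show ?thesis using x h gsrcv unfolding is_subgraph_def by blast
    qed
  qed
  obtain v1 where v1: "v1 \<in> S1" "v1 \<in> gverts G" using vert[OF S(1) S(5)] by blast
  obtain v2 where v2: "v2 \<in> S2" "v2 \<in> gverts G" using vert[OF S(2) S(6)] by blast
  have cl1: "R `` {x} \<subseteq> S1" if "x \<in> S1" for x
    using that R(3) S(4) by blast
  have vc: "v2 \<in> R `` {v2}" using equiv_class_self[OF eq] v2 unfolding gcarrier_def by blast
  have step: "gtgt ?Q D \<subseteq> S1" if D: "D \<in> gedges ?Q" "gsrc ?Q D \<subseteq> S1" for D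
  proof -
    obtain e where e: "e \<in> gedges G" "D = R `` {e}" using D(1) unfolding qg_simps by (auto elim: quotientE)
    have "gsrc G e \<in> R `` {gsrc G e}"
      using equiv_class_self[OF eq] gsrcv[OF e(1)] unfolding gcarrier_def by blast
    then have s1: "gsrc G e \<in> S1" using D(2) qclass(1)[OF R(1) e(1)] e(2) by auto
    have "e \<in> S1"
    proof (rule ccontr)
      assume "e \<notin> S1"
      then have "e \<in> S2" using S(3) e(1) unfolding gcarrier_def by blast
      then have "gsrc G e \<in> S2" using S(2) e(1) unfolding is_subgraph_def by blast
      then show False using s1 S(4) by blast
    qed
    then have "gtgt G e \<in> S1" using S(1) e(1) unfolding is_subgraph_def by blast
    then show ?thesis using cl1 qclass(2)[OF R(1) e(1)] e(2) by simp
  qed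
  have "R `` {v1} \<in> gverts ?Q" "R `` {v2} \<in> gverts ?Q" using v1 v2 unfolding qg_simps by (auto intro: quotientI)
  then obtain es where es: "path_between ?Q (R `` {v1}) (R `` {v2}) es"
    using pc unfolding path_connected_graph_def by blast
  show False
  proof (cases "es = []")
    case True
    then have "R `` {v1} = R `` {v2}" using es unfolding path_between_def by simp
    then show False using vc cl1[OF v1(1)] v2(1) S(4) by blast
  next
    case False
    have p: "set es \<subseteq> gedges ?Q" "gsrc ?Q (hd es) = R `` {v1}" "gtgt ?Q (last es) = R `` {v2}"
      "\<forall>i. Suc i < length es \<longrightarrow> gtgt ?Q (es ! i) = gsrc ?Q (es ! Suc i)"
      using es False unfolding path_between_def by auto
    have all: "i < length es \<Longrightarrow> gsrc ?Q (es ! i) \<subseteq> S1" for i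
    proof (induction i)
      case 0
      then show ?case using p(2) cl1[OF v1(1)] False by (simp add: hd_conv_nth)
    next
      case (Suc i)
      then have "gsrc ?Q (es ! i) \<subseteq> S1" by simp
      moreover have "es ! i \<in> gedges ?Q" using p(1) Suc.prems by (meson Suc_lessD nth_mem subsetD)
      ultimately have "gtgt ?Q (es ! i) \<subseteq> S1" using step by blast
      then show ?case using p(4) Suc.prems by simp
    qed
    have ln: "length es - 1 < length es" using False by simp
    have "last es = es ! (length es - 1)" using False by (simp add: last_conv_nth)
    then have "gtgt ?Q (last es) \<subseteq> S1" using step all[OF ln] p(1) ln
      by (metis nth_mem subsetD)
    then show False using p(3) vc v2(1) S(4) by blast
  qed
qed

lemma lemB:
  assumes cG: "cofinite_graph G" and ncc: "\<not> cofinitely_connected G"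
  shows "\<exists>S1 S2. S1 \<noteq> {} \<and> S2 \<noteq> {} \<and> uniform_sum G S1 S2"
proof -
  note gG = cofg(1)[OF cG] and U = cofg(2)[OF cG]
  obtain R where R: "compatible_equiv G R" "cofinite_entourage G R"
    and npc: "\<not> path_connected_graph (quotient_graph G R)"
    using ncc unfolding cofinitely_connected_def by blast
  let ?Q = "quotient_graph G R"
  note eq = ceq_parts(1)[OF R(1)] and Rsub = ceq_parts(2)[OF R(1)] and cp = ceq_parts(3)[OF R(1)]
  have RU: "R \<in> gunif G" using R(2) unfolding cofinite_entourage_def by blast
  have Rcar: "R \<subseteq> gcarrier G \<times> gcarrier G" using equiv_type[OF eq] .
  have gd: "gverts G \<inter> gedges G = {}" using gG[unfolded is_graph_def, THEN conjunct1] .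
  have gc: "\<And>e. e \<in> gedges G \<Longrightarrow> gsrc G e \<in> gverts G \<and> gtgt G e \<in> gverts G \<and>
        gbar G e \<in> gedges G \<and> gsrc G (gbar G e) = gtgt G e \<and> gtgt G (gbar G e) = gsrc G e"
    using gG[unfolded is_graph_def, THEN conjunct2] by blast
  obtain u w where uw: "u \<in> gverts ?Q" "w \<in> gverts ?Q" "\<not> (\<exists>es. path_between ?Q u w es)"
    using npc unfolding path_connected_graph_def by blast
  define Reach where "Reach = {C. \<exists>es. path_between ?Q u C es}"
  define S1 where "S1 = {x \<in> gcarrier G. (x \<in> gverts G \<and> R `` {x} \<in> Reach) \<or>
                         (x \<in> gedges G \<and> R `` {gsrc G x} \<in> Reach)}"
  define S2 where "S2 = gcarrier G - S1"
  have ext: "R `` {gtgt G e} \<in> Reach" if h: "e \<in> gedges G" "R `` {gsrc G e} \<in> Reach" for e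
  proof -
    obtain es where es: "path_between ?Q u (R `` {gsrc G e}) es" using h(2) unfolding Reach_def by blast
    have D: "R `` {e} \<in> gedges ?Q" using h(1) unfolding qg_simps by (rule quotientI)
    have "path_between ?Q u (gtgt ?Q (R `` {e})) (es @ [R `` {e}])"
      by (rule path_snoc[OF es D]) (rule qclass(1)[OF R(1) h(1)])
    then show ?thesis unfolding Reach_def qclass(2)[OF R(1) h(1)] by blast
  qed
  have car: "x \<in> gcarrier G" if "x \<in> gverts G \<or> x \<in> gedges G" for x
    using that unfolding gcarrier_def by blast
  have sg1: "is_subgraph G S1"
    unfolding is_subgraph_def
  proof (intro conjI ballI)
    show "S1 \<subseteq> gcarrier G" unfolding S1_def by blast
    fix e assume e: "e \<in> S1 \<inter> gedges G"
    then have e1: "e \<in> gedges G" "R `` {gsrc G e} \<in> Reach" using gd unfolding S1_def by blast+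
    have t: "R `` {gtgt G e} \<in> Reach" using ext e1 by blast
    show "gsrc G e \<in> S1" using e1 gc[OF e1(1)] car unfolding S1_def by blast
    show "gtgt G e \<in> S1" using t gc[OF e1(1)] car unfolding S1_def by blast
    show "gbar G e \<in> S1" using t gc[OF e1(1)] car unfolding S1_def by auto
  qed
  have sg2: "is_subgraph G S2"
    unfolding is_subgraph_def
  proof (intro conjI ballI)
    show "S2 \<subseteq> gcarrier G" unfolding S2_def by blast
    fix e assume e: "e \<in> S2 \<inter> gedges G"
    then have e1: "e \<in> gedges G" "R `` {gsrc G e} \<notin> Reach" using car unfolding S1_def S2_def by blast+
    note g = gc[OF e1(1)]
    have t: "R `` {gtgt G e} \<notin> Reach"
    proof
      assume "R `` {gtgt G e} \<in> Reach"
      then have "R `` {gtgt G (gbar G e)} \<in> Reach" using ext[of "gbar G e"] g by simp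
      then show False using e1 g by simp
    qed
    show "gsrc G e \<in> S2" using e1 g car gd unfolding S1_def S2_def by blast
    show "gtgt G e \<in> S2" using t g car gd unfolding S1_def S2_def by blast
    show "gbar G e \<in> S2" using t g car gd unfolding S1_def S2_def by auto
  qed
  have un: "S1 \<union> S2 = gcarrier G" and dj: "S1 \<inter> S2 = {}" unfolding S2_def S1_def by blast+
  obtain v where v: "u = R `` {v}" "v \<in> gverts G" using uw(1) unfolding qg_simps by (auto elim: quotientE)
  obtain v' where v': "w = R `` {v'}" "v' \<in> gverts G" using uw(2) unfolding qg_simps by (auto elim: quotientE)
  have "u \<in> Reach" unfolding Reach_def path_between_def by blast
  then have ne1: "S1 \<noteq> {}" using v car unfolding S1_def by blast
  have "w \<notin> Reach" using uw(3) unfolding Reach_def by blast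
  then have ne2: "S2 \<noteq> {}" using v' car gd unfolding S1_def S2_def by blast
  have same: "x \<in> S1 \<longleftrightarrow> y \<in> S1" if xy: "(x, y) \<in> R" for x y
  proof -
    have cls: "R `` {x} = R `` {y}" using equiv_class_eq[OF eq xy] .
    have xc: "x \<in> gcarrier G" "y \<in> gcarrier G" using xy Rcar by blast+
    show ?thesis
    proof (cases "x \<in> gverts G")
      case True
      then have "y \<in> gverts G" using xy Rsub gd by blast
      then show ?thesis using True cls xc gd unfolding S1_def by auto
    next
      case False
      then have xe: "x \<in> gedges G" "y \<in> gedges G" "y \<notin> gverts G" using xy Rsub gd by blast+
      have "(gsrc G x, gsrc G y) \<in> R" using cp[OF xy xe(1)] by blast
      then have "R `` {gsrc G x} = R `` {gsrc G y}" using equiv_class_eq[OF eq] by blast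
      then show ?thesis using False xe xc unfolding S1_def by auto
    qed
  qed
  have RS: "R \<subseteq> S1 \<times> S1 \<union> S2 \<times> S2"
  proof
    fix p assume p: "p \<in> R"
    obtain x y where xy: "p = (x, y)" by (cases p)
    have "x \<in> gcarrier G" "y \<in> gcarrier G" using p xy Rcar by blast+
    then show "p \<in> S1 \<times> S1 \<union> S2 \<times> S2" using same[of x y] p xy unfolding S2_def by blast
  qed
  have "uniform_sum G S1 S2" unfolding uniform_sum_def
  proof (intro conjI allI impI)
    show "is_subgraph G S1" "is_subgraph G S2" "S1 \<union> S2 = gcarrier G" "S1 \<inter> S2 = {}"
      using sg1 sg2 un dj by blast+
    fix W assume Wc: "W \<subseteq> gcarrier G \<times> gcarrier G"
    show "(W \<in> gunif G) =
          (\<exists>W1\<in>subspace_unif (gunif G) S1. \<exists>W2\<in>subspace_unif (gunif G) S2. W1 \<union> W2 \<subseteq> W)"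
    proof
      assume W: "W \<in> gunif G"
      have "W \<inter> (S1 \<times> S1) \<in> subspace_unif (gunif G) S1" unfolding subspace_unif_def using W by blast
      moreover have "W \<inter> (S2 \<times> S2) \<in> subspace_unif (gunif G) S2" unfolding subspace_unif_def using W by blast
      ultimately show "\<exists>W1\<in>subspace_unif (gunif G) S1. \<exists>W2\<in>subspace_unif (gunif G) S2. W1 \<union> W2 \<subseteq> W"
        by blast
    next
      assume "\<exists>W1\<in>subspace_unif (gunif G) S1. \<exists>W2\<in>subspace_unif (gunif G) S2. W1 \<union> W2 \<subseteq> W"
      then obtain V1 V2 where V: "V1 \<in> gunif G" "V2 \<in> gunif G"
        "V1 \<inter> (S1 \<times> S1) \<union> V2 \<inter> (S2 \<times> S2) \<subseteq> W"
        unfolding subspace_unif_def by blast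
      have I: "V1 \<inter> V2 \<inter> R \<in> gunif G" using unif_int[OF U unif_int[OF U V(1) V(2)] RU] .
      have "V1 \<inter> V2 \<inter> R \<subseteq> W" using V(3) RS by blast
      then show "W \<in> gunif G" using unif_up[OF U I _ Wc] by blast
    qed
  qed
  then show ?thesis using ne1 ne2 by blast
qed

theorem mainTheorem1:
  fixes G :: "'a ugraph" and H :: "'b ugraph" and \<phi> :: "'a \<Rightarrow> 'b"
  assumes "cofinite_graph G"
    and "is_completion G H \<phi>"
  shows "(cofinitely_connected G \<longleftrightarrow>
            \<not> (\<exists>S1 S2. S1 \<noteq> {} \<and> S2 \<noteq> {} \<and> uniform_sum G S1 S2))
       \<and> (cofinitely_connected G \<longleftrightarrow> cofinitely_connected H)"
proof -
  have cH: "cofinite_graph H" using compl(1)[OF assms(2)] .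
  have eqv: "cofinitely_connected K \<longleftrightarrow> \<not> (\<exists>S1 S2. disc K S1 S2)" if cK: "cofinite_graph K" for K :: "'c ugraph"
  proof
    assume "cofinitely_connected K"
    then show "\<not> (\<exists>S1 S2. disc K S1 S2)" using lemA[OF cK] by blast
  next
    assume nd: "\<not> (\<exists>S1 S2. disc K S1 S2)"
    show "cofinitely_connected K"
    proof (rule ccontr)
      assume "\<not> cofinitely_connected K"
      then obtain S1 S2 where "S1 \<noteq> {}" "S2 \<noteq> {}" "uniform_sum K S1 S2" using lemB[OF cK] by blast
      then show False using nd lemC[OF cK] by blast
    qed
  qed
  have p1: "cofinitely_connected G \<longleftrightarrow> \<not> (\<exists>S1 S2. S1 \<noteq> {} \<and> S2 \<noteq> {} \<and> uniform_sum G S1 S2)"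
  proof
    assume c: "cofinitely_connected G"
    show "\<not> (\<exists>S1 S2. S1 \<noteq> {} \<and> S2 \<noteq> {} \<and> uniform_sum G S1 S2)"
    proof
      assume "\<exists>S1 S2. S1 \<noteq> {} \<and> S2 \<noteq> {} \<and> uniform_sum G S1 S2"
      then obtain S1 S2 where "S1 \<noteq> {}" "S2 \<noteq> {}" "uniform_sum G S1 S2" by blast
      then have "disc G S1 S2" using lemC[OF assms(1)] by blast
      then show False using lemA[OF assms(1) c] by blast
    qed
  next
    assume "\<not> (\<exists>S1 S2. S1 \<noteq> {} \<and> S2 \<noteq> {} \<and> uniform_sum G S1 S2)"
    then show "cofinitely_connected G" using lemB[OF assms(1)] by blast
  qed
  have p2: "(\<exists>S1 S2. disc G S1 S2) \<longleftrightarrow> (\<exists>T1 T2. disc H T1 T2)"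
    using lemD[OF assms] lemE[OF assms] by blast
  show ?thesis using p1 p2 eqv[OF assms(1)] eqv[OF cH] by blast
qed

end
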